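(* Let $a^*\in A$ be a pure strategy profile of $G$. If for every $\bar p\in(0,1)$ there exists $p\in(0,\bar p)$ such that $a^*$ is stable for the degree of observability $p$, then $a^*$ is a Nash equilibrium of $G$.
   Context: Objective game: $G=(N,A,\pi)$ is a finite $n$-player normal-form game, $N=\{1,\dots,n\}$, finite action sets $A_i$, $A=\prod_iA_i$, fitness functions $\pi_i:A\to\mathbb{R}$ extended multilinearly to $\prod_i\Delta(A_i)$. Preference types: $\Theta=\mathbb{R}^A$ (extended multilinearly). $\mathcal{M}(\Theta^n)$: product distributions $\mu=\mu_1\times\dots\times\mu_n$ with finitely supported marginals; $\operatorname{supp}\mu=\prod_i\operatorname{supp}\mu_i$, $\mu(\theta)=\prod_i\mu_i(\theta_i)$, $\mu_{-i}(\theta_{-i})=\prod_{j\ne i}\mu_j(\theta_j)$. Mutants: for nonempty $J\subseteq N$, $\tilde\theta_J\in\prod_{j\in J}(\Theta\setminus\operatorname{supp}\mu_j)$ with shares $\varepsilon\in(0,1)^{|J|}$, $\|\varepsilon\|=\max_j\varepsilon_j$; post-entry $\tilde\mu^\varepsilon_i=(1-\varepsilon_i)\mu_i+\varepsilon_i\delta_{\tilde\theta_i}$ for $i\in J$, $\mu_i$ otherwise. Partial observability with degree $p\in(0,1)$: each player independently observes opponents' types with probability $p$ and otherwise knows only $\mu_{-i}$. Strategies: $b:\operatorname{supp}\mu\to\prod_i\Delta(A_i)$ (play when observing) and $s_i:\operatorname{supp}\mu_i\to\Delta(A_i)$ (play when not observing), $s(\theta)=(s_i(\theta_i))_i$. For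 a matched profile $\theta$ and the set $T\subseteq N$ of non-observing players, the profile played is $(s(\theta)_T,b(\theta)_{-T})$. $(b,s)$ is an equilibrium if for all $\theta\in\operatorname{supp}\mu$ and $i$: $b_i(\theta)\in\arg\max_{\sigma_i}\sum_{T\subseteq N\setminus\{i\}}p^{n-1-|T|}(1-p)^{|T|}\theta_i(\sigma_i,(s_{-i}(\theta_{-i})_T,b_{-i}(\theta)_{-T}))$ and $s_i(\theta_i)\in\arg\max_{\sigma_i}\sum_{\theta'_{-i}}\mu_{-i}(\theta'_{-i})\sum_{T\subseteq N\setminus\{i\}}p^{n-1-|T|}(1-p)^{|T|}\theta_i(\sigma_i,(s_{-i}(\theta'_{-i})_T,b_{-i}(\theta_i,\theta'_{-i})_{-T}))$; $B_p(\mu)$ is the set of these; $(\mu,b,s)$ is a configuration. Aggregate outcome: $\varphi_{\mu,b,s}(a)=\sum_{\theta}\mu(\theta)\sum_{T\subseteq N}p^{n-|T|}(1-p)^{|T|}\prod_i(s(\theta)_T,b(\theta)_{-T})_i(a_i)$. Average fitness: $\Pi_{\theta_i}(\mu;b,s)=\sum_{\theta'_{-i}}\mu_{-i}(\theta'_{-i})\sum_{T\subseteq N}p^{n-|T|}(1-p)^{|T|}\pi_i(s(\theta_i,\theta'_{-i})_T,b(\theta_i,\theta'_{-i})_{-T})$. Balanced: equal average fitness of all types within each population. Nearby set: $B_p^\eta(\tilde\mu^\varepsilon;b,s)=\{(\tilde b,\tilde s)\in B_p(\tilde\mu^\varepsilon):\max_i\|\tilde b_i(\theta)-b_i(\theta)\|\le\eta,\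 \max_i\|\tilde s_i(\theta_i)-s_i(\theta_i)\|\le\eta\ \forall\theta\in\operatorname{supp}\mu\}$. $(\mu,b,s)$ is stable (for degree $p$) if balanced and for every nonempty $J$, every $\tilde\theta_J$, every $\eta>0$, there are $\bar\eta\in[0,\eta)$, $\bar\epsilon\in(0,1)$ such that for all $\varepsilon$ with $\|\varepsilon\|\in(0,\bar\epsilon)$, $B_p^{\bar\eta}(\tilde\mu^\varepsilon;b,s)\ne\emptyset$ and each of its elements satisfies (i) some $j\in J$ has $\Pi_{\theta_j}>\Pi_{\tilde\theta_j}$ (post-entry) for all $\theta_j\in\operatorname{supp}\mu_j$, or (ii) for every $i$ all types in $\operatorname{supp}\tilde\mu^\varepsilon_i$ have equal post-entry average fitness. A pure profile $a^*$ is stable for degree $p$ if the point mass at $a^*$ is the aggregate outcome of a stable configuration for $p$. *)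

theory Defs
  imports Complex_Main "HOL-Library.FuncSet"
begin

text \<open>Players are 0, ..., n-1 (the paper's 1, ..., n).
A preference type is a real function on pure profiles (vanishing outside the
set of pure profiles, so that it is an element of R^A); it is extended
multilinearly to mixed profiles.\<close>

type_synonym 'a ptype = "(nat \<Rightarrow> 'a) \<Rightarrow> real"
type_synonym 'a mixed = "'a \<Rightarrow> real"

definition is_mixed :: "(nat \<Rightarrow> 'a set) \<Rightarrow> nat \<Rightarrow> 'a mixed \<Rightarrow> bool" where
  "is_mixed A i \<sigma> \<longleftrightarrow> (\<forall>x. 0 \<le> \<sigma> x) \<and> (\<forall>x. x \<notin> A i \<longrightarrow> \<sigma> x = 0) \<and> sum \<sigma> (A i) = 1"

definition mlin :: "nat \<Rightarrow> (nat \<Rightarrow> 'a set) \<Rightarrow> 'a ptype \<Rightarrow> (nat \<Rightarrow> 'a mixed) \<Rightarrow> real" where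
  "mlin n A u \<sigma> = (\<Sum>a\<in>PiE {..<n} A. (\<Prod>j<n. \<sigma> j (a j)) * u a)"

definition Theta :: "nat \<Rightarrow> (nat \<Rightarrow> 'a set) \<Rightarrow> 'a ptype set" where
  "Theta n A = {\<theta>. \<forall>a. a \<notin> PiE {..<n} A \<longrightarrow> \<theta> a = 0}"

definition tsupp :: "('a ptype \<Rightarrow> real) \<Rightarrow> 'a ptype set" where
  "tsupp m = {\<theta>. m \<theta> \<noteq> 0}"

definition is_tdist :: "nat \<Rightarrow> (nat \<Rightarrow> 'a set) \<Rightarrow> ('a ptype \<Rightarrow> real) \<Rightarrow> bool" where
  "is_tdist n A m \<longleftrightarrow> finite (tsupp m) \<and> tsupp m \<subseteq> Theta n A \<and> (\<forall>\<theta>. 0 \<le> m \<theta>)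
      \<and> sum m (tsupp m) = 1"

text \<open>A product distribution mu = mu_1 x ... x mu_n is given by its marginals.\<close>
definition is_popdist :: "nat \<Rightarrow> (nat \<Rightarrow> 'a set) \<Rightarrow> (nat \<Rightarrow> 'a ptype \<Rightarrow> real) \<Rightarrow> bool" where
  "is_popdist n A \<mu> \<longleftrightarrow> (\<forall>i<n. is_tdist n A (\<mu> i))"

definition tprofiles :: "nat \<Rightarrow> (nat \<Rightarrow> 'a ptype \<Rightarrow> real) \<Rightarrow> (nat \<Rightarrow> 'a ptype) set" where
  "tprofiles n \<mu> = PiE {..<n} (\<lambda>i. tsupp (\<mu> i))"

text \<open>Profile played at type profile theta when T is the set of non-observing players.\<close>
definition play ::
  "((nat \<Rightarrow> 'a ptype) \<Rightarrow> nat \<Rightarrow> 'a mixed) \<Rightarrow> (nat \<Rightarrow> 'a ptype \<Rightarrow> 'a mixed)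
     \<Rightarrow> (nat \<Rightarrow> 'a ptype) \<Rightarrow> nat set \<Rightarrow> nat \<Rightarrow> 'a mixed" where
  "play b s \<theta> T = (\<lambda>j. if j \<in> T then s j (\<theta> j) else b \<theta> j)"

definition obs_payoff ::
  "nat \<Rightarrow> (nat \<Rightarrow> 'a set) \<Rightarrow> real \<Rightarrow> ((nat \<Rightarrow> 'a ptype) \<Rightarrow> nat \<Rightarrow> 'a mixed)
     \<Rightarrow> (nat \<Rightarrow> 'a ptype \<Rightarrow> 'a mixed) \<Rightarrow> (nat \<Rightarrow> 'a ptype) \<Rightarrow> nat \<Rightarrow> 'a mixed \<Rightarrow> real" where
  "obs_payoff n A p b s \<theta> i \<sigma> =
     (\<Sum>T\<in>Pow ({..<n} - {i}). p ^ (n - 1 - card T) * (1 - p) ^ card T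
        * mlin n A (\<theta> i) ((play b s \<theta> T)(i := \<sigma>)))"

definition unobs_payoff ::
  "nat \<Rightarrow> (nat \<Rightarrow> 'a set) \<Rightarrow> real \<Rightarrow> (nat \<Rightarrow> 'a ptype \<Rightarrow> real) \<Rightarrow> ((nat \<Rightarrow> 'a ptype) \<Rightarrow> nat \<Rightarrow> 'a mixed)
     \<Rightarrow> (nat \<Rightarrow> 'a ptype \<Rightarrow> 'a mixed) \<Rightarrow> nat \<Rightarrow> 'a ptype \<Rightarrow> 'a mixed \<Rightarrow> real" where
  "unobs_payoff n A p \<mu> b s i thi \<sigma> =
     (\<Sum>\<theta>'\<in>PiE ({..<n} - {i}) (\<lambda>j. tsupp (\<mu> j)).
        (\<Prod>j\<in>{..<n} - {i}. \<mu> j (\<theta>' j)) * obs_payoff n A p b s (\<theta>'(i := thi)) i \<sigma>)"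

definition is_equilibrium ::
  "nat \<Rightarrow> (nat \<Rightarrow> 'a set) \<Rightarrow> real \<Rightarrow> (nat \<Rightarrow> 'a ptype \<Rightarrow> real) \<Rightarrow> ((nat \<Rightarrow> 'a ptype) \<Rightarrow> nat \<Rightarrow> 'a mixed)
     \<Rightarrow> (nat \<Rightarrow> 'a ptype \<Rightarrow> 'a mixed) \<Rightarrow> bool" where
  "is_equilibrium n A p \<mu> b s \<longleftrightarrow>
     (\<forall>\<theta>\<in>tprofiles n \<mu>. \<forall>i<n. is_mixed A i (b \<theta> i) \<and>
        (\<forall>\<sigma>. is_mixed A i \<sigma> \<longrightarrow> obs_payoff n A p b s \<theta> i \<sigma> \<le> obs_payoff n A p b s \<theta> i (b \<theta> i))) \<and>
     (\<forall>i<n. \<forall>thi\<in>tsupp (\<mu> i). is_mixed A i (s i thi) \<and>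
        (\<forall>\<sigma>. is_mixed A i \<sigma> \<longrightarrow> unobs_payoff n A p \<mu> b s i thi \<sigma> \<le> unobs_payoff n A p \<mu> b s i thi (s i thi)))"

definition outcome ::
  "nat \<Rightarrow> real \<Rightarrow> (nat \<Rightarrow> 'a ptype \<Rightarrow> real) \<Rightarrow> ((nat \<Rightarrow> 'a ptype) \<Rightarrow> nat \<Rightarrow> 'a mixed)
     \<Rightarrow> (nat \<Rightarrow> 'a ptype \<Rightarrow> 'a mixed) \<Rightarrow> (nat \<Rightarrow> 'a) \<Rightarrow> real" where
  "outcome n p \<mu> b s a =
     (\<Sum>\<theta>\<in>tprofiles n \<mu>. (\<Prod>i<n. \<mu> i (\<theta> i)) *
        (\<Sum>T\<in>Pow {..<n}. p ^ (n - card T) * (1 - p) ^ card T * (\<Prod>i<n. play b s \<theta> T i (a i))))"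

definition avg_fit ::
  "nat \<Rightarrow> (nat \<Rightarrow> 'a set) \<Rightarrow> (nat \<Rightarrow> (nat \<Rightarrow> 'a) \<Rightarrow> real) \<Rightarrow> real \<Rightarrow> (nat \<Rightarrow> 'a ptype \<Rightarrow> real)
     \<Rightarrow> ((nat \<Rightarrow> 'a ptype) \<Rightarrow> nat \<Rightarrow> 'a mixed) \<Rightarrow> (nat \<Rightarrow> 'a ptype \<Rightarrow> 'a mixed) \<Rightarrow> nat \<Rightarrow> 'a ptype \<Rightarrow> real" where
  "avg_fit n A \<pi> p \<mu> b s i thi =
     (\<Sum>\<theta>'\<in>PiE ({..<n} - {i}) (\<lambda>j. tsupp (\<mu> j)).
        (\<Prod>j\<in>{..<n} - {i}. \<mu> j (\<theta>' j)) *
        (\<Sum>T\<in>Pow {..<n}. p ^ (n - card T) * (1 - p) ^ card T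
            * mlin n A (\<pi> i) (play b s (\<theta>'(i := thi)) T)))"

definition balanced ::
  "nat \<Rightarrow> (nat \<Rightarrow> 'a set) \<Rightarrow> (nat \<Rightarrow> (nat \<Rightarrow> 'a) \<Rightarrow> real) \<Rightarrow> real \<Rightarrow> (nat \<Rightarrow> 'a ptype \<Rightarrow> real)
     \<Rightarrow> ((nat \<Rightarrow> 'a ptype) \<Rightarrow> nat \<Rightarrow> 'a mixed) \<Rightarrow> (nat \<Rightarrow> 'a ptype \<Rightarrow> 'a mixed) \<Rightarrow> bool" where
  "balanced n A \<pi> p \<mu> b s \<longleftrightarrow>
     (\<forall>i<n. \<forall>t1\<in>tsupp (\<mu> i). \<forall>t2\<in>tsupp (\<mu> i).
        avg_fit n A \<pi> p \<mu> b s i t1 = avg_fit n A \<pi> p \<mu> b s i t2)"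

definition post_entry ::
  "(nat \<Rightarrow> 'a ptype \<Rightarrow> real) \<Rightarrow> nat set \<Rightarrow> (nat \<Rightarrow> 'a ptype) \<Rightarrow> (nat \<Rightarrow> real) \<Rightarrow> nat \<Rightarrow> 'a ptype \<Rightarrow> real" where
  "post_entry \<mu> J thm eps = (\<lambda>i. if i \<in> J
       then (\<lambda>\<theta>. (1 - eps i) * \<mu> i \<theta> + eps i * (if \<theta> = thm i then 1 else 0))
       else \<mu> i)"

definition mdist :: "(nat \<Rightarrow> 'a set) \<Rightarrow> nat \<Rightarrow> 'a mixed \<Rightarrow> 'a mixed \<Rightarrow> real" where
  "mdist A i \<sigma> \<tau> = Max ((\<lambda>x. \<bar>\<sigma> x - \<tau> x\<bar>) ` A i)"

definition nearby ::
  "nat \<Rightarrow> (nat \<Rightarrow> 'a set) \<Rightarrow> real \<Rightarrow> (nat \<Rightarrow> 'a ptype \<Rightarrow> real) \<Rightarrow> (nat \<Rightarrow> 'a ptype \<Rightarrow> real) \<Rightarrow> real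
     \<Rightarrow> ((nat \<Rightarrow> 'a ptype) \<Rightarrow> nat \<Rightarrow> 'a mixed) \<Rightarrow> (nat \<Rightarrow> 'a ptype \<Rightarrow> 'a mixed)
     \<Rightarrow> (((nat \<Rightarrow> 'a ptype) \<Rightarrow> nat \<Rightarrow> 'a mixed) \<times> (nat \<Rightarrow> 'a ptype \<Rightarrow> 'a mixed)) set" where
  "nearby n A p \<mu> \<mu>' \<eta> b s = {(b', s'). is_equilibrium n A p \<mu>' b' s' \<and>
      (\<forall>\<theta>\<in>tprofiles n \<mu>. \<forall>i<n. mdist A i (b' \<theta> i) (b \<theta> i) \<le> \<eta>
                               \<and> mdist A i (s' i (\<theta> i)) (s i (\<theta> i)) \<le> \<eta>)}"

definition stable ::
  "nat \<Rightarrow> (nat \<Rightarrow> 'a set) \<Rightarrow> (nat \<Rightarrow> (nat \<Rightarrow> 'a) \<Rightarrow> real) \<Rightarrow> real \<Rightarrow> (nat \<Rightarrow> 'a ptype \<Rightarrow> real)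
     \<Rightarrow> ((nat \<Rightarrow> 'a ptype) \<Rightarrow> nat \<Rightarrow> 'a mixed) \<Rightarrow> (nat \<Rightarrow> 'a ptype \<Rightarrow> 'a mixed) \<Rightarrow> bool" where
  "stable n A \<pi> p \<mu> b s \<longleftrightarrow> balanced n A \<pi> p \<mu> b s \<and>
     (\<forall>J thm. J \<subseteq> {..<n} \<and> J \<noteq> {} \<and> (\<forall>j\<in>J. thm j \<in> Theta n A \<and> thm j \<notin> tsupp (\<mu> j)) \<longrightarrow>
       (\<forall>\<eta>>0. \<exists>\<eta>' \<epsilon>'. 0 \<le> \<eta>' \<and> \<eta>' < \<eta> \<and> 0 < \<epsilon>' \<and> \<epsilon>' < 1 \<and>
          (\<forall>eps. (\<forall>j\<in>J. 0 < eps j \<and> eps j < 1) \<and> Max (eps ` J) < \<epsilon>' \<longrightarrow>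
             (let \<mu>' = post_entry \<mu> J thm eps in
               nearby n A p \<mu> \<mu>' \<eta>' b s \<noteq> {} \<and>
               (\<forall>(b', s')\<in>nearby n A p \<mu> \<mu>' \<eta>' b s.
                  (\<exists>j\<in>J. \<forall>tj\<in>tsupp (\<mu> j).
                      avg_fit n A \<pi> p \<mu>' b' s' j tj > avg_fit n A \<pi> p \<mu>' b' s' j (thm j)) \<or>
                  (\<forall>i<n. \<forall>t1\<in>tsupp (\<mu>' i). \<forall>t2\<in>tsupp (\<mu>' i).
                      avg_fit n A \<pi> p \<mu>' b' s' i t1 = avg_fit n A \<pi> p \<mu>' b' s' i t2))))))"

definition stable_profile ::
  "nat \<Rightarrow> (nat \<Rightarrow> 'a set) \<Rightarrow> (nat \<Rightarrow> (nat \<Rightarrow> 'a) \<Rightarrow> real) \<Rightarrow> real \<Rightarrow> (nat \<Rightarrow> 'a) \<Rightarrow> bool" where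
  "stable_profile n A \<pi> p a \<longleftrightarrow>
     (\<exists>\<mu> b s. is_popdist n A \<mu> \<and> is_equilibrium n A p \<mu> b s \<and> stable n A \<pi> p \<mu> b s \<and>
        (\<forall>a'\<in>PiE {..<n} A. outcome n p \<mu> b s a' = (if a' = a then 1 else 0)))"

definition nash :: "nat \<Rightarrow> (nat \<Rightarrow> 'a set) \<Rightarrow> (nat \<Rightarrow> (nat \<Rightarrow> 'a) \<Rightarrow> real) \<Rightarrow> (nat \<Rightarrow> 'a) \<Rightarrow> bool" where
  "nash n A \<pi> a \<longleftrightarrow> a \<in> PiE {..<n} A \<and> (\<forall>i<n. \<forall>x\<in>A i. \<pi> i (a(i := x)) \<le> \<pi> i a)"

end

theory Submission
  imports Defs
begin

lemma wsum:
  fixes p :: real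
  assumes "finite S"
  shows "(\<Sum>T\<in>Pow S. p ^ (card S - card T) * (1 - p) ^ card T) = 1"
proof -
  have "(\<Prod>x\<in>S. (1 - p) + p) = (\<Sum>X\<in>Pow S. (\<Prod>x\<in>X. 1 - p) * (\<Prod>x\<in>S-X. p))"
    by (rule prod_add[OF assms])
  also have "\<dots> = (\<Sum>T\<in>Pow S. p ^ (card S - card T) * (1 - p) ^ card T)"
  proof (rule sum.cong)
    fix X assume "X \<in> Pow S"
    then have "card (S - X) = card S - card X"
      using assms by (simp add: card_Diff_subset finite_subset)
    then show "(\<Prod>x\<in>X. 1 - p) * (\<Prod>x\<in>S-X. p) = p ^ (card S - card X) * (1 - p) ^ card X"
      by simp
  qed simp
  finally show ?thesis by simp
qed

lemma pie_sum:
  fixes f :: "nat \<Rightarrow> 'b \<Rightarrow> real"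
  assumes "finite S" "\<And>j. j \<in> S \<Longrightarrow> finite (B j)" "\<And>j. j \<in> S \<Longrightarrow> sum (f j) (B j) = 1"
  shows "(\<Sum>g\<in>PiE S B. \<Prod>j\<in>S. f j (g j)) = 1"
proof -
  have "(\<Sum>g\<in>PiE S B. \<Prod>j\<in>S. f j (g j)) = (\<Prod>j\<in>S. \<Sum>y\<in>B j. f j y)"
    using prod_sum_PiE[of S B f] assms(1,2) by simp
  also have "\<dots> = 1" using assms(3) by simp
  finally show ?thesis .
qed

lemma prod_lower:
  fixes x :: "nat \<Rightarrow> real"
  assumes "finite S" "\<And>j. j \<in> S \<Longrightarrow> 0 \<le> x j \<and> x j \<le> 1"
  shows "1 - (\<Sum>j\<in>S. 1 - x j) \<le> (\<Prod>j\<in>S. x j)"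
  using assms
proof (induction S rule: finite_induct)
  case empty then show ?case by simp
next
  case (insert k S)
  have IH: "1 - (\<Sum>j\<in>S. 1 - x j) \<le> (\<Prod>j\<in>S. x j)" using insert by auto
  have xk: "0 \<le> x k" "x k \<le> 1" using insert by auto
  have s0: "0 \<le> (\<Sum>j\<in>S. 1 - x j)" using insert by (intro sum_nonneg) auto
  have "x k * (1 - (\<Sum>j\<in>S. 1 - x j)) \<le> x k * (\<Prod>j\<in>S. x j)"
    using IH xk by (intro mult_left_mono) auto
  moreover have "1 - ((1 - x k) + (\<Sum>j\<in>S. 1 - x j)) \<le> x k * (1 - (\<Sum>j\<in>S. 1 - x j))"
  proof -
    define s where "s = (\<Sum>j\<in>S. 1 - x j)"
    have h: "0 \<le> s * (1 - x k)" using s0 xk unfolding s_def by (intro mult_nonneg_nonneg) auto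
    have "1 - ((1 - x k) + s) \<le> x k * (1 - s)"
      using h by (simp add: algebra_simps)
    then show ?thesis unfolding s_def .
  qed
  ultimately show ?case using insert by simp
qed

lemma eq1:
  fixes w x :: "'b \<Rightarrow> real"
  assumes "finite S" "\<And>k. k \<in> S \<Longrightarrow> 0 \<le> w k \<and> x k \<le> 1" "sum w S = 1"
    "(\<Sum>k\<in>S. w k * x k) = 1" "k \<in> S" "w k > 0"
  shows "x k = 1"
proof -
  have "(\<Sum>k\<in>S. w k * (1 - x k)) = 0"
    using assms(3,4) by (simp add: algebra_simps sum_subtractf)
  moreover have "\<forall>k\<in>S. 0 \<le> w k * (1 - x k)" using assms(2) by auto
  ultimately have "\<forall>k\<in>S. w k * (1 - x k) = 0"
    using sum_nonneg_eq_0_iff[OF assms(1), of "\<lambda>k. w k * (1 - x k)"] by simp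
  then have "w k * (1 - x k) = 0" using assms(5) by simp
  then show ?thesis using assms(6) by simp
qed

lemma prod_eq1:
  fixes f :: "'b \<Rightarrow> real"
  assumes "finite S" "\<And>j. j \<in> S \<Longrightarrow> 0 \<le> f j \<and> f j \<le> 1" "prod f S = 1" "k \<in> S"
  shows "f k = 1"
proof (rule ccontr)
  assume "f k \<noteq> 1"
  then have lt: "f k < 1" using assms(2,4) by force
  have "prod f S = f k * prod f (S - {k})" using assms(1,4) by (simp add: prod.remove)
  moreover have "0 \<le> prod f (S - {k})" "prod f (S - {k}) \<le> 1"
    using assms(2) by (auto intro: prod_nonneg prod_le_1)
  ultimately have "prod f S \<le> f k" using assms(2,4)
    by (metis mult_left_le)
  then show False using lt assms(3) by simp
qed

lemma mixed_le1:
  assumes "is_mixed A j \<sigma>" "finite (A j)" "y \<in> A j"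
  shows "0 \<le> \<sigma> y \<and> \<sigma> y \<le> 1"
proof -
  have "\<sigma> y \<le> sum \<sigma> (A j)" using assms
    by (intro member_le_sum) (auto simp: is_mixed_def)
  then show ?thesis using assms by (auto simp: is_mixed_def)
qed

lemma mlin_near:
  fixes u :: "(nat \<Rightarrow> 'a) \<Rightarrow> real"
  assumes fin: "\<And>j. j<n \<Longrightarrow> finite (A j)" and mix: "\<And>j. j<n \<Longrightarrow> is_mixed A j (\<sigma> j)"
    and a: "a \<in> PiE {..<n} A" and bnd: "\<And>a'. a' \<in> PiE {..<n} A \<Longrightarrow> \<bar>u a'\<bar> \<le> M"
    and near: "\<And>j. j<n \<Longrightarrow> \<sigma> j (a j) \<ge> 1 - \<eta>"
  shows "\<bar>mlin n A u \<sigma> - u a\<bar> \<le> 2*M*(real n*\<eta>)"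
proof -
  define S where "S = PiE {..<n} A"
  define P where "P = (\<lambda>a'. \<Prod>j<n. \<sigma> j (a' j))"
  have finS: "finite S" unfolding S_def using fin by (intro finite_PiE) auto
  have aS: "a \<in> S" using a S_def by simp
  have sP: "sum P S = 1" unfolding P_def S_def
    using mix fin by (intro pie_sum) (auto simp: is_mixed_def)
  have Pnn: "\<And>a'. 0 \<le> P a'" unfolding P_def using mix
    by (intro prod_nonneg) (auto simp: is_mixed_def)
  have M0: "0 \<le> M" using bnd[OF a] by simp
  have "mlin n A u \<sigma> - u a = (\<Sum>a'\<in>S. P a' * u a') - (\<Sum>a'\<in>S. P a') * u a"
  proof -
    have "mlin n A u \<sigma> = (\<Sum>a'\<in>S. P a' * u a')" unfolding mlin_def P_def S_def by (rule refl)
    then show ?thesis using sP by simp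
  qed
  also have "\<dots> = (\<Sum>a'\<in>S. P a' * (u a' - u a))"
  proof -
    have "(\<Sum>a'\<in>S. P a' * u a) = (\<Sum>a'\<in>S. P a') * u a" by (simp add: sum_distrib_right)
    then show ?thesis by (simp add: sum_subtractf right_diff_distrib)
  qed
  also have "\<dots> = (\<Sum>a'\<in>S-{a}. P a' * (u a' - u a))"
    using finS aS by (simp add: sum.remove)
  finally have eq: "mlin n A u \<sigma> - u a = (\<Sum>a'\<in>S-{a}. P a' * (u a' - u a))" .
  have "\<bar>\<Sum>a'\<in>S-{a}. P a' * (u a' - u a)\<bar> \<le> (\<Sum>a'\<in>S-{a}. \<bar>P a' * (u a' - u a)\<bar>)"
    by (rule sum_abs)
  also have "\<dots> \<le> (\<Sum>a'\<in>S-{a}. P a' * (2*M))"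
  proof (rule sum_mono)
    fix a' assume "a' \<in> S - {a}"
    then have "\<bar>u a'\<bar> \<le> M" using bnd S_def by auto
    then have "\<bar>u a' - u a\<bar> \<le> 2*M" using bnd[OF a] by linarith
    then show "\<bar>P a' * (u a' - u a)\<bar> \<le> P a' * (2*M)"
      using Pnn[of a'] by (simp add: abs_mult mult_left_mono)
  qed
  also have "\<dots> = (2*M) * (1 - P a)"
  proof -
    have "sum P (S-{a}) = 1 - P a" using sP finS aS by (simp add: sum.remove)
    moreover have "(\<Sum>a'\<in>S-{a}. P a' * (2*M)) = sum P (S-{a}) * (2*M)" by (simp add: sum_distrib_right)
    ultimately show ?thesis by simp
  qed
  also have "\<dots> \<le> (2*M) * (real n * \<eta>)"
  proof (rule mult_left_mono)
    have "1 - (\<Sum>j<n. 1 - \<sigma> j (a j)) \<le> P a" unfolding P_def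
    proof (rule prod_lower)
      fix j assume "j \<in> {..<n}"
      then have j: "j < n" by simp
      show "0 \<le> \<sigma> j (a j) \<and> \<sigma> j (a j) \<le> 1"
        by (rule mixed_le1[OF mix[OF j] fin[OF j]]) (use a j in \<open>auto simp: PiE_iff\<close>)
    qed simp
    moreover have "(\<Sum>j<n. 1 - \<sigma> j (a j)) \<le> (\<Sum>j<n. \<eta>)"
      using near by (intro sum_mono) (auto simp: algebra_simps)
    ultimately show "1 - P a \<le> real n * \<eta>" by simp
  qed (use M0 in simp)
  finally show ?thesis unfolding eq .
qed

lemma mlin_mut:
  fixes \<tau> :: "nat \<Rightarrow> 'a \<Rightarrow> real"
  assumes fin: "\<And>j. j<n \<Longrightarrow> finite (A j)" and mix: "\<And>j. j<n \<Longrightarrow> j \<noteq> i \<Longrightarrow> is_mixed A j (\<tau> j)"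
    and i: "i < n" and x: "x \<in> A i"
  shows "mlin n A (\<lambda>a'. if a' \<in> PiE {..<n} A \<and> a' i = x then c else 0) \<tau> = c * \<tau> i x"
proof -
  define \<tau>' where "\<tau>' = \<tau>(i := (\<lambda>y. if y = x then \<tau> i y else 0))"
  have "mlin n A (\<lambda>a'. if a' \<in> PiE {..<n} A \<and> a' i = x then c else 0) \<tau>
      = c * (\<Sum>a'\<in>PiE {..<n} A. \<Prod>j<n. \<tau>' j (a' j))"
    unfolding mlin_def sum_distrib_left
  proof (rule sum.cong)
    fix a' assume a': "a' \<in> PiE {..<n} A"
    have "(\<Prod>j<n. \<tau>' j (a' j)) = \<tau>' i (a' i) * (\<Prod>j\<in>{..<n}-{i}. \<tau>' j (a' j))"
      using i by (simp add: prod.remove)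
    also have "\<dots> = (if a' i = x then 1 else 0) * (\<tau> i (a' i) * (\<Prod>j\<in>{..<n}-{i}. \<tau> j (a' j)))"
    proof -
      have "(\<Prod>j\<in>{..<n}-{i}. \<tau>' j (a' j)) = (\<Prod>j\<in>{..<n}-{i}. \<tau> j (a' j))"
        unfolding \<tau>'_def by (intro prod.cong) auto
      then show ?thesis unfolding \<tau>'_def by simp
    qed
    also have "\<dots> = (if a' i = x then 1 else 0) * (\<Prod>j<n. \<tau> j (a' j))"
      using i by (simp add: prod.remove)
    finally show "(\<Prod>j<n. \<tau> j (a' j)) * (if a' \<in> PiE {..<n} A \<and> a' i = x then c else 0)
        = c * (\<Prod>j<n. \<tau>' j (a' j))" using a' by simp
  qed simp
  also have "(\<Sum>a'\<in>PiE {..<n} A. \<Prod>j<n. \<tau>' j (a' j)) = (\<Prod>j<n. \<Sum>y\<in>A j. \<tau>' j y)"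
    using prod_sum_PiE[of "{..<n}" A "\<lambda>j y. \<tau>' j y"] fin by simp
  also have "\<dots> = (\<Sum>y\<in>A i. \<tau>' i y) * (\<Prod>j\<in>{..<n}-{i}. \<Sum>y\<in>A j. \<tau>' j y)"
    using i by (simp add: prod.remove)
  also have "(\<Sum>y\<in>A i. \<tau>' i y) = \<tau> i x"
    unfolding \<tau>'_def using fin[OF i] x by (simp add: sum.delta)
  also have "(\<Prod>j\<in>{..<n}-{i}. \<Sum>y\<in>A j. \<tau>' j y) = 1"
    unfolding \<tau>'_def using mix by (intro prod.neutral) (auto simp: is_mixed_def)
  finally show ?thesis by (simp only: mult_1_right)
qed

lemma play_mixed:
  assumes "is_equilibrium n A p \<mu> b s" "\<theta> \<in> tprofiles n \<mu>" "j < n"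
  shows "is_mixed A j (play b s \<theta> T j)"
proof -
  have "\<theta> j \<in> tsupp (\<mu> j)" using assms(2,3) by (auto simp: tprofiles_def PiE_iff)
  then show ?thesis using assms unfolding is_equilibrium_def play_def by auto
qed

lemma mdist_ge:
  assumes "finite (A j)" "y \<in> A j"
  shows "\<bar>\<sigma> y - \<tau> y\<bar> \<le> mdist A j \<sigma> \<tau>"
  unfolding mdist_def using assms by (intro Max_ge) auto

lemma upd_PiE:
  assumes "\<theta>' \<in> PiE (S - {i}) B" "i \<in> S" "t \<in> B i"
  shows "\<theta>'(i:=t) \<in> PiE S B"
  using assms by (auto simp: PiE_iff extensional_def)

lemma sum_bound_le:
  fixes w f :: "'b \<Rightarrow> real"
  assumes "finite S" "\<And>k. k\<in>S \<Longrightarrow> 0 \<le> w k" "sum w S = 1" "\<And>k. k\<in>S \<Longrightarrow> f k \<le> U"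
  shows "(\<Sum>k\<in>S. w k * f k) \<le> U"
proof -
  have "(\<Sum>k\<in>S. w k * f k) \<le> (\<Sum>k\<in>S. w k * U)"
    using assms by (intro sum_mono mult_left_mono) auto
  also have "\<dots> = U" using assms(3) by (simp add: sum_distrib_right[symmetric])
  finally show ?thesis .
qed

lemma sum_bound_ge:
  fixes w f :: "'b \<Rightarrow> real"
  assumes "finite S" "\<And>k. k\<in>S \<Longrightarrow> 0 \<le> w k" "sum w S = 1" "\<And>k. k\<in>S \<Longrightarrow> L \<le> f k"
  shows "L \<le> (\<Sum>k\<in>S. w k * f k)"
proof -
  have "(\<Sum>k\<in>S. w k * L) \<le> (\<Sum>k\<in>S. w k * f k)"
    using assms by (intro sum_mono mult_left_mono) auto
  moreover have "(\<Sum>k\<in>S. w k * L) = L" using assms(3) by (simp add: sum_distrib_right[symmetric])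
  ultimately show ?thesis by simp
qed

lemma bad_weight:
  fixes p :: real
  assumes p: "0 < p" "p < 1" and bad: "\<And>T. T \<subseteq> {..<n} \<Longrightarrow> B T \<Longrightarrow> T \<noteq> {..<n}"
  shows "(\<Sum>T\<in>Pow {..<n}. p ^ (n - card T) * (1 - p) ^ card T * (if B T then 1 else 0)) \<le> 2 ^ n * p"
proof -
  have "(\<Sum>T\<in>Pow {..<n}. p ^ (n - card T) * (1 - p) ^ card T * (if B T then 1 else 0))
      \<le> (\<Sum>T\<in>Pow {..<n}. p)"
  proof (rule sum_mono)
    fix T assume T: "T \<in> Pow {..<n}"
    show "p ^ (n - card T) * (1 - p) ^ card T * (if B T then 1 else 0) \<le> p"
    proof (cases "B T")
      case True
      then have "T \<noteq> {..<n}" using bad T by auto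
      then have "T \<subset> {..<n}" using T by auto
      then have "card T < n" using psubset_card_mono[of "{..<n}" T] by simp
      then have "p ^ (n - card T) \<le> p ^ 1" using p by (intro power_decreasing) auto
      moreover have "(1 - p) ^ card T \<le> 1" using p by (intro power_le_one) auto
      moreover have "0 \<le> p ^ (n - card T)" using p by simp
      ultimately have "p ^ (n - card T) * (1 - p) ^ card T \<le> p * 1"
        using p by (intro mult_mono) auto
      then show ?thesis using True by simp
    qed (use p in simp)
  qed
  also have "\<dots> = 2 ^ n * p" by (simp add: card_Pow)
  finally show ?thesis .
qed

theorem mainTheorem15:
  fixes n :: nat and A :: "nat \<Rightarrow> 'a set" and \<pi> :: "nat \<Rightarrow> (nat \<Rightarrow> 'a) \<Rightarrow> real"
    and a :: "nat \<Rightarrow> 'a"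
  assumes "\<forall>i<n. finite (A i) \<and> A i \<noteq> {}"
    and "a \<in> PiE {..<n} A"
    and "\<forall>pbar. 0 < pbar \<and> pbar < 1 \<longrightarrow> (\<exists>p. 0 < p \<and> p < pbar \<and> stable_profile n A \<pi> p a)"
  shows "nash n A \<pi> a"
proof (rule ccontr)
  assume nn: "\<not> nash n A \<pi> a"
  have aP: "a \<in> PiE {..<n} A" by (rule assms(2))
  have fin: "\<And>j. j < n \<Longrightarrow> finite (A j)" using assms(1) by auto
  obtain i x where i: "i < n" and x: "x \<in> A i" and gt: "\<pi> i (a(i:=x)) > \<pi> i a"
    using nn aP unfolding nash_def by force
  have n0: "0 < n" using i by simp
  define ax where "ax = a(i:=x)"
  have axP: "ax \<in> PiE {..<n} A" unfolding ax_def using aP i x by (auto simp: PiE_iff extensional_def)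
  define g where "g = \<pi> i ax - \<pi> i a"
  have g0: "0 < g" using gt unfolding g_def ax_def by simp
  define M where "M = 1 + (\<Sum>a'\<in>PiE {..<n} A. \<bar>\<pi> i a'\<bar>)"
  have finP: "finite (PiE {..<n} A)" using fin by (intro finite_PiE) auto
  have bnd: "\<And>a'. a' \<in> PiE {..<n} A \<Longrightarrow> \<bar>\<pi> i a'\<bar> \<le> M"
  proof -
    fix a' assume "a' \<in> PiE {..<n} A"
    then have "\<bar>\<pi> i a'\<bar> \<le> (\<Sum>a'\<in>PiE {..<n} A. \<bar>\<pi> i a'\<bar>)"
      using finP by (intro member_le_sum) auto
    then show "\<bar>\<pi> i a'\<bar> \<le> M" unfolding M_def by simp
  qed
  have M0: "0 < M"
  proof -
    have "0 \<le> (\<Sum>a'\<in>PiE {..<n} A. \<bar>\<pi> i a'\<bar>)" by (intro sum_nonneg) auto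
    then show ?thesis unfolding M_def by linarith
  qed
  define K where "K = 2 * M * (real n + 1)"
  have K0: "0 < K" unfolding K_def using M0 by simp
  define pbar where "pbar = min (1/2) (g / (4 * K * 2 ^ n))"
  have pbar0: "0 < pbar" "pbar < 1" unfolding pbar_def using g0 K0 by auto
  obtain p where p0: "0 < p" and ppbar: "p < pbar" and sp: "stable_profile n A \<pi> p a"
    using assms(3) pbar0 by blast
  have p1: "p < 1" using ppbar pbar0 unfolding pbar_def by auto
  have pK: "K * 2 ^ n * p < g / 4"
  proof -
    have "p < g / (4 * K * 2 ^ n)" using ppbar unfolding pbar_def by auto
    then have "p * (4 * K * 2 ^ n) < g" using K0 by (simp add: field_simps)
    then show ?thesis by (simp add: algebra_simps)
  qed
  obtain \<mu> b s where pop: "is_popdist n A \<mu>" and eq: "is_equilibrium n A p \<mu> b s"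
      and st: "stable n A \<pi> p \<mu> b s"
      and out: "\<forall>a'\<in>PiE {..<n} A. outcome n p \<mu> b s a' = (if a' = a then 1 else 0)"
    using sp unfolding stable_profile_def by blast
  have td: "\<And>j. j < n \<Longrightarrow> is_tdist n A (\<mu> j)" using pop unfolding is_popdist_def by blast
  have finT: "\<And>j. j < n \<Longrightarrow> finite (tsupp (\<mu> j))" using td unfolding is_tdist_def by blast
  have sumT: "\<And>j. j < n \<Longrightarrow> sum (\<mu> j) (tsupp (\<mu> j)) = 1" using td unfolding is_tdist_def by blast
  have nnT: "\<And>j t. j < n \<Longrightarrow> 0 \<le> \<mu> j t" using td unfolding is_tdist_def by blast
  have tsupp_ne: "\<And>j. j < n \<Longrightarrow> tsupp (\<mu> j) \<noteq> {}" using sumT by fastforce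
  have tsupp_pos: "\<And>j t. j < n \<Longrightarrow> t \<in> tsupp (\<mu> j) \<Longrightarrow> 0 < \<mu> j t"
    using nnT unfolding tsupp_def by (metis less_eq_real_def mem_Collect_eq)

  have pure: "\<forall>\<theta>\<in>tprofiles n \<mu>. \<forall>j<n. b \<theta> j (a j) = 1 \<and> s j (\<theta> j) (a j) = 1"
  proof (intro ballI allI impI)
    fix \<theta> j assume th: "\<theta> \<in> tprofiles n \<mu>" and j: "j < n"
    define W where "W = (\<lambda>\<theta>. \<Prod>i<n. \<mu> i (\<theta> i))"
    define w where "w = (\<lambda>T::nat set. p ^ (n - card T) * (1 - p) ^ card T)"
    define Q where "Q = (\<lambda>\<theta> T. \<Prod>i<n. play b s \<theta> T i (a i))"
    define X where "X = (\<lambda>\<theta>. \<Sum>T\<in>Pow {..<n}. w T * Q \<theta> T)"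
    have finTP: "finite (tprofiles n \<mu>)" unfolding tprofiles_def using finT by (intro finite_PiE) auto
    have sW: "sum W (tprofiles n \<mu>) = 1" unfolding W_def tprofiles_def
      using finT sumT by (intro pie_sum) auto
    have Wpos: "\<And>\<theta>. \<theta> \<in> tprofiles n \<mu> \<Longrightarrow> 0 < W \<theta>" unfolding W_def
      using tsupp_pos by (intro prod_pos) (auto simp: tprofiles_def PiE_iff)
    have sw: "sum w (Pow {..<n}) = 1" unfolding w_def using wsum[of "{..<n}" p] by simp
    have wpos: "\<And>T. 0 < w T" unfolding w_def using p0 p1 by simp
    have Q01: "\<And>\<theta> T. \<theta> \<in> tprofiles n \<mu> \<Longrightarrow> 0 \<le> Q \<theta> T \<and> Q \<theta> T \<le> 1"
    proof -
      fix \<theta> T assume "\<theta> \<in> tprofiles n \<mu>"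
      then have h: "\<And>i. i \<in> {..<n} \<Longrightarrow> 0 \<le> play b s \<theta> T i (a i) \<and> play b s \<theta> T i (a i) \<le> 1"
        using play_mixed[OF eq] fin aP by (intro mixed_le1) (auto simp: PiE_iff)
      show "0 \<le> Q \<theta> T \<and> Q \<theta> T \<le> 1" unfolding Q_def
        using h by (auto intro: prod_nonneg prod_le_1)
    qed
    have X1: "\<And>\<theta>. \<theta> \<in> tprofiles n \<mu> \<Longrightarrow> X \<theta> \<le> 1"
      unfolding X_def using sw wpos Q01 by (intro sum_bound_le) (auto simp: less_imp_le)
    have "outcome n p \<mu> b s a = 1" using out aP by simp
    then have sX: "(\<Sum>\<theta>\<in>tprofiles n \<mu>. W \<theta> * X \<theta>) = 1"
      unfolding outcome_def W_def X_def w_def Q_def by simp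
    have "X \<theta> = 1"
      by (rule eq1[of "tprofiles n \<mu>" W X \<theta>]) (use finTP sW sX th Wpos X1 in \<open>auto simp: less_imp_le\<close>)
    then have sQ: "(\<Sum>T\<in>Pow {..<n}. w T * Q \<theta> T) = 1" unfolding X_def .
    have Q1: "\<And>T. T \<in> Pow {..<n} \<Longrightarrow> Q \<theta> T = 1"
      by (rule eq1[of "Pow {..<n}" w "Q \<theta>"]) (use sw sQ Q01[OF th] wpos in \<open>auto simp: less_imp_le\<close>)
    have h01: "\<And>T i. i \<in> {..<n} \<Longrightarrow> 0 \<le> play b s \<theta> T i (a i) \<and> play b s \<theta> T i (a i) \<le> 1"
      using play_mixed[OF eq th] fin aP by (intro mixed_le1) (auto simp: PiE_iff)
    have "play b s \<theta> {} j (a j) = 1"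
      by (rule prod_eq1[of "{..<n}"]) (use h01 Q1[of "{}"] j in \<open>auto simp: Q_def\<close>)
    moreover have "play b s \<theta> {..<n} j (a j) = 1"
      by (rule prod_eq1[of "{..<n}"]) (use h01 Q1[of "{..<n}"] j in \<open>auto simp: Q_def\<close>)
    ultimately show "b \<theta> j (a j) = 1 \<and> s j (\<theta> j) (a j) = 1" using j by (simp add: play_def)
  qed

  define tmk where "tmk = (\<lambda>k::nat. (\<lambda>a'. if a' \<in> PiE {..<n} A \<and> a' i = x then real (Suc k) else 0) :: 'a ptype)"
  have inj: "inj tmk"
  proof (rule injI)
    fix k1 k2 assume "tmk k1 = tmk k2"
    then have "tmk k1 ax = tmk k2 ax" by simp
    then show "k1 = k2" using axP unfolding tmk_def ax_def by simp
  qed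
  have "finite (tmk -` tsupp (\<mu> i))" using finT[OF i] inj by (intro finite_vimageI)
  then obtain k where k: "k \<notin> tmk -` tsupp (\<mu> i)"
    using ex_new_if_finite[OF infinite_UNIV_nat] by blast
  define c where "c = real (Suc k)"
  have c0: "0 < c" unfolding c_def by simp
  define tm where "tm = (\<lambda>a'. if a' \<in> PiE {..<n} A \<and> a' i = x then c else 0)"
  have tm_def2: "tm = tmk k" unfolding tm_def tmk_def c_def by simp
  have tm_notin: "tm \<notin> tsupp (\<mu> i)" using k tm_def2 by simp
  have tm_Theta: "tm \<in> Theta n A" unfolding tm_def Theta_def by auto
  have mu_tm: "\<mu> i tm = 0" using tm_notin unfolding tsupp_def by simp
  obtain t0 where t0: "t0 \<in> tsupp (\<mu> i)" using tsupp_ne[OF i] by blast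
  have t0ne: "t0 \<noteq> tm" using t0 tm_notin by auto

  define \<eta> where "\<eta> = g / (8 * M * real n)"
  have \<eta>0: "0 < \<eta>" unfolding \<eta>_def using g0 M0 n0 by simp
  have st2: "\<forall>J thm. J \<subseteq> {..<n} \<and> J \<noteq> {} \<and> (\<forall>j\<in>J. thm j \<in> Theta n A \<and> thm j \<notin> tsupp (\<mu> j)) \<longrightarrow>
       (\<forall>\<eta>>0. \<exists>\<eta>' \<epsilon>'. 0 \<le> \<eta>' \<and> \<eta>' < \<eta> \<and> 0 < \<epsilon>' \<and> \<epsilon>' < 1 \<and>
          (\<forall>eps. (\<forall>j\<in>J. 0 < eps j \<and> eps j < 1) \<and> Max (eps ` J) < \<epsilon>' \<longrightarrow>
             (let \<mu>' = post_entry \<mu> J thm eps in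
               nearby n A p \<mu> \<mu>' \<eta>' b s \<noteq> {} \<and>
               (\<forall>(b', s')\<in>nearby n A p \<mu> \<mu>' \<eta>' b s.
                  (\<exists>j\<in>J. \<forall>tj\<in>tsupp (\<mu> j).
                      avg_fit n A \<pi> p \<mu>' b' s' j tj > avg_fit n A \<pi> p \<mu>' b' s' j (thm j)) \<or>
                  (\<forall>i<n. \<forall>t1\<in>tsupp (\<mu>' i). \<forall>t2\<in>tsupp (\<mu>' i).
                      avg_fit n A \<pi> p \<mu>' b' s' i t1 = avg_fit n A \<pi> p \<mu>' b' s' i t2)))))"
    using st unfolding stable_def by blast
  have prem: "{i} \<subseteq> {..<n} \<and> {i} \<noteq> {} \<and> (\<forall>j\<in>{i}. (\<lambda>_. tm) j \<in> Theta n A \<and> (\<lambda>_. tm) j \<notin> tsupp (\<mu> j))"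
    using i tm_Theta tm_notin by auto
  obtain \<eta>' \<epsilon>' where e1: "0 \<le> \<eta>'" "\<eta>' < \<eta>" "0 < \<epsilon>'" "\<epsilon>' < 1"
    and e2: "\<forall>eps. (\<forall>j\<in>{i}. 0 < eps j \<and> eps j < 1) \<and> Max (eps ` {i}) < \<epsilon>' \<longrightarrow>
             (let \<mu>' = post_entry \<mu> {i} (\<lambda>_. tm) eps in
               nearby n A p \<mu> \<mu>' \<eta>' b s \<noteq> {} \<and>
               (\<forall>(b', s')\<in>nearby n A p \<mu> \<mu>' \<eta>' b s.
                  (\<exists>j\<in>{i}. \<forall>tj\<in>tsupp (\<mu> j).
                      avg_fit n A \<pi> p \<mu>' b' s' j tj > avg_fit n A \<pi> p \<mu>' b' s' j ((\<lambda>_. tm) j)) \<or>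
                  (\<forall>i<n. \<forall>t1\<in>tsupp (\<mu>' i). \<forall>t2\<in>tsupp (\<mu>' i).
                      avg_fit n A \<pi> p \<mu>' b' s' i t1 = avg_fit n A \<pi> p \<mu>' b' s' i t2)))"
    using st2[THEN spec[of _ "{i}"], THEN spec[of _ "\<lambda>_. tm"], THEN mp, OF prem,
       THEN spec[of _ \<eta>], THEN mp, OF \<eta>0]
    by (elim exE conjE) (rule that; assumption)
  define e where "e = \<epsilon>' / 2"
  have e0: "0 < e" "e < 1" "e < \<epsilon>'" unfolding e_def using e1 by auto
  define \<mu>' where "\<mu>' = post_entry \<mu> {i} (\<lambda>_. tm) (\<lambda>_. e)"
  have e3: "nearby n A p \<mu> \<mu>' \<eta>' b s \<noteq> {} \<and>
               (\<forall>(b', s')\<in>nearby n A p \<mu> \<mu>' \<eta>' b s.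
                  (\<exists>j\<in>{i}. \<forall>tj\<in>tsupp (\<mu> j).
                      avg_fit n A \<pi> p \<mu>' b' s' j tj > avg_fit n A \<pi> p \<mu>' b' s' j tm) \<or>
                  (\<forall>i<n. \<forall>t1\<in>tsupp (\<mu>' i). \<forall>t2\<in>tsupp (\<mu>' i).
                      avg_fit n A \<pi> p \<mu>' b' s' i t1 = avg_fit n A \<pi> p \<mu>' b' s' i t2))"
    using e2[rule_format, of "\<lambda>_. e"] e0 unfolding \<mu>'_def Let_def by simp
  obtain b' s' where bs': "(b', s') \<in> nearby n A p \<mu> \<mu>' \<eta>' b s" using e3 by auto
  have disj: "(\<forall>tj\<in>tsupp (\<mu> i). avg_fit n A \<pi> p \<mu>' b' s' i tj > avg_fit n A \<pi> p \<mu>' b' s' i tm) \<or>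
      (\<forall>i<n. \<forall>t1\<in>tsupp (\<mu>' i). \<forall>t2\<in>tsupp (\<mu>' i).
                      avg_fit n A \<pi> p \<mu>' b' s' i t1 = avg_fit n A \<pi> p \<mu>' b' s' i t2)"
    using e3 bs' by blast
  have mu'_other: "\<And>j. j \<noteq> i \<Longrightarrow> \<mu>' j = \<mu> j" unfolding \<mu>'_def post_entry_def by simp
  have mu'_i: "\<And>t. \<mu>' i t = (1 - e) * \<mu> i t + e * (if t = tm then 1 else 0)"
    unfolding \<mu>'_def post_entry_def by simp
  have tm_in: "tm \<in> tsupp (\<mu>' i)" unfolding tsupp_def using mu'_i mu_tm e0 by simp
  have tsupp_sub: "\<And>j. tsupp (\<mu> j) \<subseteq> tsupp (\<mu>' j)"
  proof -
    fix j show "tsupp (\<mu> j) \<subseteq> tsupp (\<mu>' j)"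
    proof (cases "j = i")
      case True
      show ?thesis
      proof
        fix t assume t: "t \<in> tsupp (\<mu> j)"
        then have "t \<noteq> tm" using tm_notin True by auto
        then have "\<mu>' i t = (1 - e) * \<mu> i t" using mu'_i by simp
        then show "t \<in> tsupp (\<mu>' j)" using t True e0 unfolding tsupp_def by simp
      qed
    qed (use mu'_other in simp)
  qed
  have tsupp_eq: "\<And>j. j \<noteq> i \<Longrightarrow> tsupp (\<mu>' j) = tsupp (\<mu> j)" using mu'_other by simp
  have tp_sub: "tprofiles n \<mu> \<subseteq> tprofiles n \<mu>'" unfolding tprofiles_def
    by (rule PiE_mono) (use tsupp_sub in auto)
  have eq': "is_equilibrium n A p \<mu>' b' s'" using bs' unfolding nearby_def by simp
  have close: "\<forall>\<theta>\<in>tprofiles n \<mu>. \<forall>j<n. mdist A j (b' \<theta> j) (b \<theta> j) \<le> \<eta>'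
                               \<and> mdist A j (s' j (\<theta> j)) (s j (\<theta> j)) \<le> \<eta>'"
    using bs' unfolding nearby_def by simp
  have aj: "\<And>j. j < n \<Longrightarrow> a j \<in> A j" using aP by (auto simp: PiE_iff)
  have nb: "\<And>\<theta> j. \<theta> \<in> tprofiles n \<mu> \<Longrightarrow> j < n \<Longrightarrow> 1 - \<eta>' \<le> b' \<theta> j (a j)"
  proof -
    fix \<theta> j assume th: "\<theta> \<in> tprofiles n \<mu>" and j: "j < n"
    have "\<bar>b' \<theta> j (a j) - b \<theta> j (a j)\<bar> \<le> mdist A j (b' \<theta> j) (b \<theta> j)"
      by (rule mdist_ge[of A j, OF fin[OF j] aj[OF j]])
    then show "1 - \<eta>' \<le> b' \<theta> j (a j)" using close th j pure by fastforce
  qed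
  have ns: "\<And>\<theta> j. \<theta> \<in> tprofiles n \<mu> \<Longrightarrow> j < n \<Longrightarrow> 1 - \<eta>' \<le> s' j (\<theta> j) (a j)"
  proof -
    fix \<theta> j assume th: "\<theta> \<in> tprofiles n \<mu>" and j: "j < n"
    have "\<bar>s' j (\<theta> j) (a j) - s j (\<theta> j) (a j)\<bar> \<le> mdist A j (s' j (\<theta> j)) (s j (\<theta> j))"
      by (rule mdist_ge[of A j, OF fin[OF j] aj[OF j]])
    then show "1 - \<eta>' \<le> s' j (\<theta> j) (a j)" using close th j pure by fastforce
  qed
  define S\<theta> where "S\<theta> = PiE ({..<n}-{i}) (\<lambda>j. tsupp (\<mu> j))"
  define v where "v = (\<lambda>\<theta>'. \<Prod>j\<in>{..<n}-{i}. \<mu> j (\<theta>' j))"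
  have finS: "finite S\<theta>" unfolding S\<theta>_def using finT by (intro finite_PiE) auto
  have vnn: "\<And>\<theta>'. 0 \<le> v \<theta>'" unfolding v_def using nnT by (intro prod_nonneg) auto
  have sv: "sum v S\<theta> = 1" unfolding v_def S\<theta>_def using finT sumT by (intro pie_sum) auto
  have Seq: "PiE ({..<n}-{i}) (\<lambda>j. tsupp (\<mu>' j)) = S\<theta>" unfolding S\<theta>_def
    by (rule PiE_cong) (use tsupp_eq in auto)
  have veq: "\<And>\<theta>'. (\<Prod>j\<in>{..<n}-{i}. \<mu>' j (\<theta>' j)) = v \<theta>'" unfolding v_def
    by (rule prod.cong) (use mu'_other in auto)
  have up0: "\<And>\<theta>'. \<theta>' \<in> S\<theta> \<Longrightarrow> \<theta>'(i:=t0) \<in> tprofiles n \<mu>"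
    unfolding S\<theta>_def tprofiles_def using i t0 by (intro upd_PiE) auto
  have upm: "\<And>\<theta>'. \<theta>' \<in> S\<theta> \<Longrightarrow> \<theta>'(i:=tm) \<in> tprofiles n \<mu>'"
    unfolding tprofiles_def Seq[symmetric] using i tm_in by (intro upd_PiE) auto
  define w where "w = (\<lambda>T::nat set. p ^ (n - card T) * (1 - p) ^ card T)"
  have sw: "sum w (Pow {..<n}) = 1" unfolding w_def using wsum[of "{..<n}" p] by simp
  have wnn: "\<And>T. 0 \<le> w T" unfolding w_def using p0 p1 by simp
  define F where "F = (\<lambda>\<theta>' t. \<Sum>T\<in>Pow {..<n}. w T * mlin n A (\<pi> i) (play b' s' (\<theta>'(i:=t)) T))"
  have avg_eq: "\<And>t. avg_fit n A \<pi> p \<mu>' b' s' i t = (\<Sum>\<theta>'\<in>S\<theta>. v \<theta>' * F \<theta>' t)"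
    unfolding avg_fit_def F_def w_def by (simp add: Seq veq)
  define \<delta> where "\<delta> = 2 * M * (real n * \<eta>')"
  have \<delta>0: "0 \<le> \<delta>" unfolding \<delta>_def using M0 e1 by simp
  have \<delta>le: "\<delta> \<le> g / 4"
  proof -
    have "\<delta> \<le> 2 * M * (real n * \<eta>)" unfolding \<delta>_def using M0 e1 by (intro mult_left_mono) auto
    also have "\<dots> = g / 4" unfolding \<eta>_def using M0 n0 by (simp add: field_simps)
    finally show ?thesis .
  qed

  have inc: "\<And>\<theta>'. \<theta>' \<in> S\<theta> \<Longrightarrow> F \<theta>' t0 \<le> \<pi> i a + \<delta>"
  proof -
    fix \<theta>' assume th': "\<theta>' \<in> S\<theta>"
    define \<theta> where "\<theta> = \<theta>'(i:=t0)"
    have th: "\<theta> \<in> tprofiles n \<mu>" unfolding \<theta>_def using up0[OF th'] .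
    have th2: "\<theta> \<in> tprofiles n \<mu>'" using th tp_sub by auto
    show "F \<theta>' t0 \<le> \<pi> i a + \<delta>" unfolding F_def \<theta>_def[symmetric]
    proof (rule sum_bound_le[OF _ _ sw])
      fix T assume "T \<in> Pow {..<n}"
      have "\<bar>mlin n A (\<pi> i) (play b' s' \<theta> T) - \<pi> i a\<bar> \<le> \<delta>" unfolding \<delta>_def
      proof (rule mlin_near[OF fin _ aP bnd])
        fix j assume j: "j < n"
        show "is_mixed A j (play b' s' \<theta> T j)" by (rule play_mixed[OF eq' th2 j])
        show "1 - \<eta>' \<le> play b' s' \<theta> T j (a j)"
          using nb[OF th j] ns[OF th j] unfolding play_def by simp
      qed auto
      then show "mlin n A (\<pi> i) (play b' s' \<theta> T) \<le> \<pi> i a + \<delta>" by simp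
    qed (use wnn in auto)
  qed

  define dx where "dx = (\<lambda>y. if y = x then 1 else 0::real)"
  have dx_mixed: "is_mixed A i dx" unfolding is_mixed_def dx_def using x fin[OF i]
    by (auto simp: sum.delta)
  have obs_mut: "\<And>\<theta>m \<sigma>. \<theta>m \<in> tprofiles n \<mu>' \<Longrightarrow> \<theta>m i = tm \<Longrightarrow>
      obs_payoff n A p b' s' \<theta>m i \<sigma> = c * \<sigma> x"
  proof -
    fix \<theta>m \<sigma> assume hm: "\<theta>m \<in> tprofiles n \<mu>'" and thi: "\<theta>m i = tm"
    have m: "\<And>T. mlin n A (\<theta>m i) ((play b' s' \<theta>m T)(i := \<sigma>)) = c * \<sigma> x"
    proof -
      fix T
      have "mlin n A tm ((play b' s' \<theta>m T)(i := \<sigma>)) = c * ((play b' s' \<theta>m T)(i := \<sigma>)) i x"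
        unfolding tm_def
        by (rule mlin_mut[where n=n and A=A and i=i and x=x and c=c and \<tau>="(play b' s' \<theta>m T)(i := \<sigma>)"])
           (use play_mixed[OF eq' hm] fin i x in auto)
      then show "mlin n A (\<theta>m i) ((play b' s' \<theta>m T)(i := \<sigma>)) = c * \<sigma> x" using thi by simp
    qed
    have cardS: "card ({..<n} - {i}) = n - 1" using i by simp
    have "obs_payoff n A p b' s' \<theta>m i \<sigma>
        = (\<Sum>T\<in>Pow ({..<n} - {i}). p ^ (n - 1 - card T) * (1 - p) ^ card T) * (c * \<sigma> x)"
      unfolding obs_payoff_def m by (simp add: sum_distrib_right)
    also have "(\<Sum>T\<in>Pow ({..<n} - {i}). p ^ (n - 1 - card T) * (1 - p) ^ card T) = 1"
      using wsum[of "{..<n} - {i}" p] cardS by simp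
    finally show "obs_payoff n A p b' s' \<theta>m i \<sigma> = c * \<sigma> x" by simp
  qed
  have bm: "\<And>\<theta>'. \<theta>' \<in> S\<theta> \<Longrightarrow> 1 \<le> b' (\<theta>'(i:=tm)) i x"
  proof -
    fix \<theta>' assume th': "\<theta>' \<in> S\<theta>"
    have hm: "\<theta>'(i:=tm) \<in> tprofiles n \<mu>'" by (rule upm[OF th'])
    have "obs_payoff n A p b' s' (\<theta>'(i:=tm)) i dx \<le> obs_payoff n A p b' s' (\<theta>'(i:=tm)) i (b' (\<theta>'(i:=tm)) i)"
      using eq' hm i dx_mixed unfolding is_equilibrium_def by blast
    then have "c * 1 \<le> c * b' (\<theta>'(i:=tm)) i x"
      using obs_mut[OF hm] by (simp add: dx_def)
    then show "1 \<le> b' (\<theta>'(i:=tm)) i x" using c0 by simp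
  qed
  have unobs_mut: "\<And>\<sigma>. unobs_payoff n A p \<mu>' b' s' i tm \<sigma> = c * \<sigma> x"
  proof -
    fix \<sigma>
    have "unobs_payoff n A p \<mu>' b' s' i tm \<sigma> = (\<Sum>\<theta>'\<in>S\<theta>. v \<theta>' * (c * \<sigma> x))"
      unfolding unobs_payoff_def Seq veq
      by (rule sum.cong) (use obs_mut upm in auto)
    also have "\<dots> = c * \<sigma> x" using sv by (simp add: sum_distrib_right[symmetric])
    finally show "unobs_payoff n A p \<mu>' b' s' i tm \<sigma> = c * \<sigma> x" .
  qed
  have sm: "1 \<le> s' i tm x"
  proof -
    have "unobs_payoff n A p \<mu>' b' s' i tm dx \<le> unobs_payoff n A p \<mu>' b' s' i tm (s' i tm)"
      using eq' tm_in i dx_mixed unfolding is_equilibrium_def by blast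
    then have "c * 1 \<le> c * s' i tm x" using unobs_mut by (simp add: dx_def)
    then show ?thesis using c0 by simp
  qed

  have mut: "\<And>\<theta>'. \<theta>' \<in> S\<theta> \<Longrightarrow> \<pi> i ax - \<delta> - K * 2 ^ n * p \<le> F \<theta>' tm"
  proof -
    fix \<theta>' assume th': "\<theta>' \<in> S\<theta>"
    define \<theta>m where "\<theta>m = \<theta>'(i:=tm)"
    define \<theta>0 where "\<theta>0 = \<theta>'(i:=t0)"
    have hm: "\<theta>m \<in> tprofiles n \<mu>'" unfolding \<theta>m_def by (rule upm[OF th'])
    have h0: "\<theta>0 \<in> tprofiles n \<mu>" unfolding \<theta>0_def by (rule up0[OF th'])
    define bad where "bad = (\<lambda>T. \<not> ({..<n} - {i} \<subseteq> T))"
    define ind where "ind = (\<lambda>T. if bad T then 1 else (0::real))"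
    define L where "L = \<pi> i ax - \<delta>"
    have mT: "\<And>T. T \<in> Pow {..<n} \<Longrightarrow> L - K * ind T \<le> mlin n A (\<pi> i) (play b' s' \<theta>m T)"
    proof -
      fix T assume T: "T \<in> Pow {..<n}"
      show "L - K * ind T \<le> mlin n A (\<pi> i) (play b' s' \<theta>m T)"
      proof (cases "bad T")
        case False
        then have sub: "{..<n} - {i} \<subseteq> T" unfolding bad_def by simp
        have "\<bar>mlin n A (\<pi> i) (play b' s' \<theta>m T) - \<pi> i ax\<bar> \<le> \<delta>" unfolding \<delta>_def
        proof (rule mlin_near[OF fin _ axP bnd])
          fix j assume j: "j < n"
          show "is_mixed A j (play b' s' \<theta>m T j)" by (rule play_mixed[OF eq' hm j])
          show "1 - \<eta>' \<le> play b' s' \<theta>m T j (ax j)"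
          proof (cases "j = i")
            case True
            have "1 \<le> play b' s' \<theta>m T j (ax j)"
              using True bm[OF th'] sm unfolding play_def \<theta>m_def ax_def by simp
            then show ?thesis using e1 by simp
          next
            case False
            then have "j \<in> T" using sub j by auto
            then have "play b' s' \<theta>m T j (ax j) = s' j (\<theta>0 j) (a j)"
              unfolding play_def \<theta>m_def \<theta>0_def ax_def using False by simp
            then show ?thesis using ns[OF h0 j] by simp
          qed
        qed auto
        then show ?thesis unfolding L_def ind_def using False by simp
      next
        case True
        have "\<bar>mlin n A (\<pi> i) (play b' s' \<theta>m T) - \<pi> i a\<bar> \<le> 2 * M * (real n * 1)"
        proof (rule mlin_near[OF fin _ aP bnd])
          fix j assume j: "j < n"
          show "is_mixed A j (play b' s' \<theta>m T j)" by (rule play_mixed[OF eq' hm j])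
          then show "1 - 1 \<le> play b' s' \<theta>m T j (a j)" unfolding is_mixed_def by simp
        qed auto
        moreover have "\<pi> i ax - \<pi> i a \<le> 2 * M" using bnd[OF axP] bnd[OF aP] by linarith
        ultimately show ?thesis unfolding L_def ind_def K_def using True \<delta>0
          by (simp add: algebra_simps)
      qed
    qed
    have "(\<Sum>T\<in>Pow {..<n}. w T * (L - K * ind T)) \<le> F \<theta>' tm"
      unfolding F_def \<theta>m_def[symmetric] using mT wnn by (intro sum_mono mult_left_mono) auto
    moreover have "(\<Sum>T\<in>Pow {..<n}. w T * (L - K * ind T))
        = (\<Sum>T\<in>Pow {..<n}. w T) * L - K * (\<Sum>T\<in>Pow {..<n}. w T * ind T)"
      by (simp add: right_diff_distrib sum_subtractf sum_distrib_left sum_distrib_right mult.left_commute)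
    moreover have "(\<Sum>T\<in>Pow {..<n}. w T * ind T) \<le> 2 ^ n * p"
      unfolding w_def ind_def
      by (rule bad_weight[OF p0 p1]) (auto simp: bad_def)
    moreover have "K * (\<Sum>T\<in>Pow {..<n}. w T * ind T) \<le> K * (2 ^ n * p)"
      using calculation(3) K0 by (intro mult_left_mono) auto
    ultimately have "L - K * (2 ^ n * p) \<le> F \<theta>' tm" using sw by simp
    then show "\<pi> i ax - \<delta> - K * 2 ^ n * p \<le> F \<theta>' tm" unfolding L_def by (simp add: algebra_simps)
  qed

  have A0: "avg_fit n A \<pi> p \<mu>' b' s' i t0 \<le> \<pi> i a + \<delta>"
    unfolding avg_eq by (rule sum_bound_le[OF finS _ sv]) (use vnn inc in auto)
  have Am: "\<pi> i ax - \<delta> - K * 2 ^ n * p \<le> avg_fit n A \<pi> p \<mu>' b' s' i tm"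
    unfolding avg_eq by (rule sum_bound_ge[OF finS _ sv]) (use vnn mut in auto)
  have lt: "avg_fit n A \<pi> p \<mu>' b' s' i t0 < avg_fit n A \<pi> p \<mu>' b' s' i tm"
    using A0 Am \<delta>le pK g_def g0 by linarith
  have t0' : "t0 \<in> tsupp (\<mu>' i)" using t0 tsupp_sub by auto
  show False using disj
  proof
    assume "\<forall>tj\<in>tsupp (\<mu> i). avg_fit n A \<pi> p \<mu>' b' s' i tj > avg_fit n A \<pi> p \<mu>' b' s' i tm"
    then show False using t0 lt by force
  next
    assume "\<forall>i<n. \<forall>t1\<in>tsupp (\<mu>' i). \<forall>t2\<in>tsupp (\<mu>' i).
                      avg_fit n A \<pi> p \<mu>' b' s' i t1 = avg_fit n A \<pi> p \<mu>' b' s' i t2"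
    then have "avg_fit n A \<pi> p \<mu>' b' s' i t0 = avg_fit n A \<pi> p \<mu>' b' s' i tm"
      using i t0' tm_in by blast
    then show False using lt by simp
  qed
qed

end
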